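(* Let $g\in C^1$ be a Riemannian metric on $\mathbb{R}^D$ written as $g_x(u,u)=u^{\top}H(x)u$, with $\|H(x)-H(y)\|_{\mathcal{B}}\le L_H\|x-y\|_2$ for all $x,y$. Let $N\ge1$, $\gamma^{\mathrm{p}}\in\mathcal{C}^N_{\mathrm{p}}$, and $K_3^2:=\frac1N\sum_{n=0}^{N-1}\|\beta^{\mathrm{p}}(t_n)\|_2^2$. Then $$\left|\mathcal{E}^g(\gamma^{\mathrm{pl}})-\mathcal{E}^g_{\mathrm{l},N}(\gamma^{\mathrm{p}})\right|\le\frac{L_HK_3^3}{2N^{1/2}}.$$
   Context: $t_n=n/N$, $h=1/N$; $\mathcal{C}^N_{\mathrm{p}}$ is the set of maps $\gamma^{\mathrm{p}}:\{t_0,\dots,t_N\}\to\mathbb{R}^D$; $\beta^{\mathrm{p}}(t_n)=(\gamma^{\mathrm{p}}(t_{n+1})-\gamma^{\mathrm{p}}(t_n))/h$; $\gamma^{\mathrm{pl}}(t_n+s)=(1-Ns)\gamma^{\mathrm{p}}(t_n)+Ns\gamma^{\mathrm{p}}(t_{n+1})$ for $0\le s\le h$; $\mathcal{E}^g(\gamma)=\int_0^1 g_{\gamma(t)}(\dot\gamma,\dot\gamma)dt$; $\mathcal{E}^g_{\mathrm{l},N}(\gamma^{\mathrm{p}})=\frac1N\sum_{n=0}^{N-1}g_{\gamma^{\mathrm{p}}(t_n)}(\beta^{\mathrm{p}}(t_n),\beta^{\mathrm{p}}(t_n))$. $\|\cdot\|_{\mathcal{B}}$ is the operator norm. *)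

theory Defs
  imports "HOL-Analysis.Analysis"
begin

text \<open>Grid t_n = n/N. A discrete path is gamma_p :: nat => real^'d, meaningful on 0..N.\<close>

definition beta_p :: "nat \<Rightarrow> (nat \<Rightarrow> real^'d) \<Rightarrow> nat \<Rightarrow> real^'d" where
  "beta_p N gp n = real N *\<^sub>R (gp (Suc n) - gp n)"

definition gamma_pl :: "nat \<Rightarrow> (nat \<Rightarrow> real^'d) \<Rightarrow> real \<Rightarrow> real^'d" where
  "gamma_pl N gp t =
     (let n = min (nat \<lfloor>t * real N\<rfloor>) (N - 1);
          s = t - real n / real N
      in (1 - real N * s) *\<^sub>R gp n + (real N * s) *\<^sub>R gp (Suc n))"

definition energy :: "(real^'d \<Rightarrow> real^'d^'d) \<Rightarrow> (real \<Rightarrow> real^'d) \<Rightarrow> real" where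
  "energy H \<gamma> = integral {0..1}
     (\<lambda>t. vector_derivative \<gamma> (at t) \<bullet> (H (\<gamma> t) *v vector_derivative \<gamma> (at t)))"

definition energy_l :: "(real^'d \<Rightarrow> real^'d^'d) \<Rightarrow> nat \<Rightarrow> (nat \<Rightarrow> real^'d) \<Rightarrow> real" where
  "energy_l H N gp = (1 / real N) * (\<Sum>n<N. beta_p N gp n \<bullet> (H (gp n) *v beta_p N gp n))"

end

theory Submission
  imports Defs
begin

lemma gpl_eq:
  assumes N: "N \<ge> 1" and k: "k < N" and t1: "real k / real N \<le> t" and t2: "t < real (Suc k) / real N"
  shows "gamma_pl N gp t = gp k + (real N * t - real k) *\<^sub>R (gp (Suc k) - gp k)"
proof -
  have Np: "real N > 0" using N by simp
  have a: "real k \<le> t * real N" using t1 Np by (simp add: field_simps)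
  have b: "t * real N < real k + 1" using t2 Np by (simp add: field_simps)
  have fl: "\<lfloor>t * real N\<rfloor> = int k" using a b by (simp add: floor_eq_iff)
  have n: "min (nat \<lfloor>t * real N\<rfloor>) (N - 1) = k" using fl k by simp
  have s: "real N * (t - real k / real N) = real N * t - real k" using Np by (simp add: field_simps)
  show ?thesis unfolding gamma_pl_def Let_def n s
    by (simp add: algebra_simps)
qed

lemma gpl_vd:
  assumes N: "N \<ge> 1" and k: "k < N" and t1: "real k / real N < t" and t2: "t < real (Suc k) / real N"
  shows "vector_derivative (gamma_pl N gp) (at t) = beta_p N gp k"
proof -
  let ?f = "\<lambda>t. gp k + (real N * t - real k) *\<^sub>R (gp (Suc k) - gp k)"
  have d: "(?f has_vector_derivative beta_p N gp k) (at t)"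
    unfolding beta_p_def
    by (auto intro!: derivative_eq_intros)
  have "(gamma_pl N gp has_vector_derivative beta_p N gp k) (at t)"
    apply (rule has_vector_derivative_transform_within_open[OF d, of "{real k / real N<..<real (Suc k) / real N}"])
    using t1 t2 by (auto simp: gpl_eq[OF N k])
  then show ?thesis by (rule vector_derivative_at)
qed

lemma bl_mv: "bounded_linear (\<lambda>A::real^'n^'m. A *v v)"
  unfolding linear_conv_bounded_linear[symmetric]
  by (rule linearI) (auto simp: vec_eq_iff matrix_vector_mult_def sum_distrib_left sum.distrib algebra_simps)

lemma quad_bound:
  fixes A B :: "real^'d^'d" and v :: "real^'d"
  assumes "onorm (\<lambda>u. (A - B) *v u) \<le> c"
  shows "\<bar>v \<bullet> (A *v v) - v \<bullet> (B *v v)\<bar> \<le> c * (norm v)^2"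
proof -
  have "\<bar>v \<bullet> (A *v v) - v \<bullet> (B *v v)\<bar> = \<bar>v \<bullet> ((A - B) *v v)\<bar>"
    by (simp add: matrix_vector_mult_diff_rdistrib inner_diff_right)
  also have "\<dots> \<le> norm v * norm ((A - B) *v v)" by (rule Cauchy_Schwarz_ineq2)
  also have "\<dots> \<le> norm v * (onorm (\<lambda>u. (A - B) *v u) * norm v)"
    by (intro mult_left_mono onorm) (auto simp: matrix_vector_mul_bounded_linear)
  also have "\<dots> \<le> norm v * (c * norm v)"
    by (intro mult_left_mono mult_right_mono assms) auto
  finally show ?thesis by (simp add: power2_eq_square algebra_simps)
qed

lemma piece:
  fixes H :: "real^'d \<Rightarrow> real^'d^'d" and gp :: "nat \<Rightarrow> real^'d"
  assumes N: "N \<ge> 1" and k: "k < N" and Hc: "continuous_on UNIV H"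
    and lip: "\<And>x y. onorm (\<lambda>u. (H x - H y) *v u) \<le> L_H * norm (x - y)"
  shows "\<exists>I. ((\<lambda>t. vector_derivative (gamma_pl N gp) (at t) \<bullet> (H (gamma_pl N gp t) *v vector_derivative (gamma_pl N gp) (at t)))
            has_integral I) {real k / real N .. real (Suc k) / real N}
        \<and> \<bar>I - (1 / real N) * (beta_p N gp k \<bullet> (H (gp k) *v beta_p N gp k))\<bar>
           \<le> L_H * (norm (beta_p N gp k))^3 / (2 * (real N)^2)"
proof -
  define a where "a = real k / real N"
  define b where "b = real (Suc k) / real N"
  define \<beta> where "\<beta> = beta_p N gp k"
  define d where "d = gp (Suc k) - gp k"
  define c where "c = \<beta> \<bullet> (H (gp k) *v \<beta>)"
  define \<Phi> where "\<Phi> = (\<lambda>x. \<beta> \<bullet> (H x *v \<beta>))"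
  define g where "g = (\<lambda>t. \<Phi> (gp k + (real N * t - real k) *\<^sub>R d))"
  have Np: "real N > 0" using N by simp
  have ab: "a \<le> b" "b - a = 1 / real N" unfolding a_def b_def using Np by (auto simp: field_simps)
  have \<beta>d: "\<beta> = real N *\<^sub>R d" unfolding \<beta>_def d_def beta_p_def by simp
  have Phic: "continuous_on UNIV \<Phi>"
    unfolding \<Phi>_def
    apply (rule continuous_on_compose2[OF _ Hc, of UNIV "\<lambda>A. \<beta> \<bullet> (A *v \<beta>)"])
    apply (intro continuous_intros linear_continuous_on bl_mv) by auto
  have gc: "continuous_on {a..b} g"
    unfolding g_def
    apply (rule continuous_on_compose2[OF Phic])
    by (auto intro!: continuous_intros)
  define I where "I = integral {a..b} g"
  have gI: "(g has_integral I) {a..b}"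
    unfolding I_def using gc by (intro integrable_integral integrable_continuous_interval)
  have fI: "((\<lambda>t. vector_derivative (gamma_pl N gp) (at t) \<bullet> (H (gamma_pl N gp t) *v vector_derivative (gamma_pl N gp) (at t)))
            has_integral I) {a..b}"
  proof (rule has_integral_spike_finite[OF _ _ gI, of "{a,b}"])
    fix t assume t: "t \<in> {a..b} - {a,b}"
    then have t1: "real k / real N < t" and t2: "t < real (Suc k) / real N"
      unfolding a_def b_def by auto
    show "vector_derivative (gamma_pl N gp) (at t) \<bullet> (H (gamma_pl N gp t) *v vector_derivative (gamma_pl N gp) (at t)) = g t"
      unfolding g_def \<Phi>_def \<beta>_def d_def
      by (simp only: gpl_vd[OF N k t1 t2] gpl_eq[OF N k less_imp_le[OF t1] t2])
  qed auto
  define B where "B = L_H * (norm \<beta>)^3"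
  have bnd: "\<bar>g t - c\<bar> \<le> B * (t - a)" if t: "t \<in> {a..b}" for t
  proof -
    have ta: "real N * t - real k = real N * (t - a)" unfolding a_def using Np by (simp add: field_simps)
    have nn: "real N * t - real k \<ge> 0" using t ta Np by simp
    have "\<bar>g t - c\<bar> \<le> (L_H * norm ((gp k + (real N * t - real k) *\<^sub>R d) - gp k)) * (norm \<beta>)^2"
      unfolding g_def c_def \<Phi>_def by (rule quad_bound[OF lip])
    also have "norm ((gp k + (real N * t - real k) *\<^sub>R d) - gp k) = (t - a) * norm \<beta>"
      using nn ta Np by (simp add: \<beta>d)
    finally show ?thesis unfolding B_def by (simp add: power3_eq_cube power2_eq_square algebra_simps)
  qed
  have cI: "((\<lambda>t. c) has_integral c / real N) {a..b}"
    using has_integral_const_real[of c a b] ab by (simp add: divide_simps)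
  have dI: "((\<lambda>t. g t - c) has_integral I - c / real N) {a..b}"
    by (rule has_integral_diff[OF gI cI])
  have BI: "((\<lambda>t. B * (t - a)) has_integral (B * (b - a)^2 / 2 - B * (a - a)^2 / 2)) {a..b}"
    apply (rule fundamental_theorem_of_calculus[OF ab(1)])
    apply (rule has_vector_derivative_at_within)
    unfolding has_real_derivative_iff_has_vector_derivative[symmetric]
    by (auto intro!: derivative_eq_intros simp: power2_eq_square field_simps)
  have BI': "((\<lambda>t. B * (t - a)) has_integral B / (2 * (real N)^2)) {a..b}"
    using BI ab by (simp add: power2_eq_square field_simps)
  have le1: "I - c / real N \<le> B / (2 * (real N)^2)"
    by (rule has_integral_le[OF dI BI']) (use bnd in fastforce)
  have mdI: "((\<lambda>t. -(g t - c)) has_integral -(I - c / real N)) {a..b}"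
    by (rule has_integral_neg[OF dI])
  have le2: "-(I - c / real N) \<le> B / (2 * (real N)^2)"
    by (rule has_integral_le[OF mdI BI']) (use bnd in fastforce)
  show ?thesis
    apply (rule exI[of _ I])
    using fI le1 le2 unfolding a_def b_def B_def c_def \<beta>_def by auto
qed


theorem proposition8p2:
  fixes H :: "real^'d \<Rightarrow> real^'d^'d" and L_H :: real and N :: nat
    and gp :: "nat \<Rightarrow> real^'d"
  assumes C1: "\<exists>H'. (\<forall>x. (H has_derivative blinfun_apply (H' x)) (at x)) \<and> continuous_on UNIV H'"
    and sym: "\<And>x. transpose (H x) = H x"
    and posdef: "\<And>x u. u \<noteq> 0 \<Longrightarrow> u \<bullet> (H x *v u) > 0"
    and lip: "\<And>x y. onorm (\<lambda>u. (H x - H y) *v u) \<le> L_H * norm (x - y)"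
    and N: "N \<ge> 1"
  defines "K3 \<equiv> sqrt ((1 / real N) * (\<Sum>n<N. (norm (beta_p N gp n))\<^sup>2))"
  shows "\<bar>energy H (gamma_pl N gp) - energy_l H N gp\<bar> \<le> L_H * K3 ^ 3 / (2 * sqrt (real N))"
proof -
  obtain H' where H': "\<forall>x. (H has_derivative blinfun_apply (H' x)) (at x)" using C1 by blast
  have Hc: "continuous_on UNIV H"
    by (rule continuous_at_imp_continuous_on) (use H' has_derivative_continuous in blast)
  have Np: "real N > 0" using N by simp
  have L0: "L_H \<ge> 0"
  proof -
    have "0 \<le> onorm (\<lambda>u. (H 0 - H 1) *v u)"
      by (rule onorm_pos_le) (simp add: matrix_vector_mul_bounded_linear)
    also have "\<dots> \<le> L_H * norm (0 - (1::real^'d))" by (rule lip)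
    finally have "0 \<le> L_H * norm (0 - (1::real^'d))" .
    moreover have "norm (0 - (1::real^'d)) > 0" by (simp add: vec_eq_iff)
    ultimately show ?thesis by (simp add: zero_le_mult_iff)
  qed
  define f where "f = (\<lambda>t. vector_derivative (gamma_pl N gp) (at t) \<bullet> (H (gamma_pl N gp t) *v vector_derivative (gamma_pl N gp) (at t)))"
  define \<beta> where "\<beta> = beta_p N gp"
  define c where "c = (\<lambda>k. \<beta> k \<bullet> (H (gp k) *v \<beta> k))"
  have "\<forall>k. \<exists>I. k < N \<longrightarrow> (f has_integral I) {real k / real N .. real (Suc k) / real N}
        \<and> \<bar>I - (1 / real N) * c k\<bar> \<le> L_H * (norm (\<beta> k))^3 / (2 * (real N)^2)"
    using piece[OF N _ Hc lip] unfolding f_def c_def \<beta>_def by blast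
  then obtain I where I: "\<And>k. k < N \<Longrightarrow> (f has_integral I k) {real k / real N .. real (Suc k) / real N}"
    and Ib: "\<And>k. k < N \<Longrightarrow> \<bar>I k - (1 / real N) * c k\<bar> \<le> L_H * (norm (\<beta> k))^3 / (2 * (real N)^2)"
    by metis
  have comb: "m \<le> N \<Longrightarrow> (f has_integral (\<Sum>k<m. I k)) {0 .. real m / real N}" for m
  proof (induction m)
    case 0
    then show ?case using has_integral_refl(2)[of f "0::real"] by simp
  next
    case (Suc m)
    have "(f has_integral (\<Sum>k<m. I k) + I m) {0..real (Suc m) / real N}"
      apply (rule has_integral_combine[of 0 "real m / real N" "real (Suc m) / real N"])
      using Suc Np I[of m] by (auto simp: divide_simps)
    then show ?case by simp
  qed
  have "(f has_integral (\<Sum>k<N. I k)) {0..1}" using comb[of N] Np by simp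
  then have E: "energy H (gamma_pl N gp) = (\<Sum>k<N. I k)"
    unfolding energy_def f_def by (rule integral_unique)
  have El: "energy_l H N gp = (\<Sum>k<N. (1 / real N) * c k)"
    unfolding energy_l_def c_def \<beta>_def by (simp add: sum_distrib_left)
  have "\<bar>energy H (gamma_pl N gp) - energy_l H N gp\<bar> = \<bar>\<Sum>k<N. I k - (1 / real N) * c k\<bar>"
    unfolding E El by (simp add: sum_subtractf)
  also have "\<dots> \<le> (\<Sum>k<N. \<bar>I k - (1 / real N) * c k\<bar>)" by (rule sum_abs)
  also have "\<dots> \<le> (\<Sum>k<N. L_H * (norm (\<beta> k))^3 / (2 * (real N)^2))"
    by (rule sum_mono) (use Ib in auto)
  also have "\<dots> = L_H / (2 * (real N)^2) * (\<Sum>k<N. (norm (\<beta> k))^3)"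
    by (simp add: sum_distrib_left)
  also have "\<dots> \<le> L_H * K3 ^ 3 / (2 * sqrt (real N))"
  proof -
    define S where "S = (\<Sum>k<N. (norm (\<beta> k))^2)"
    have S0: "S \<ge> 0" unfolding S_def by (simp add: sum_nonneg)
    have nb: "norm (\<beta> k) \<le> sqrt S" if "k < N" for k
    proof -
      have "(norm (\<beta> k))^2 \<le> S" unfolding S_def
        by (rule member_le_sum) (use that in auto)
      then show ?thesis by (simp add: real_le_rsqrt)
    qed
    have "(\<Sum>k<N. (norm (\<beta> k))^3) \<le> (\<Sum>k<N. (norm (\<beta> k))^2 * sqrt S)"
      by (rule sum_mono) (use nb in \<open>auto simp: power3_eq_cube power2_eq_square intro!: mult_left_mono\<close>)
    also have "\<dots> = S * sqrt S" unfolding S_def by (simp add: sum_distrib_right)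
    finally have s3: "(\<Sum>k<N. (norm (\<beta> k))^3) \<le> S * sqrt S" .
    have K3: "K3 = sqrt S / sqrt (real N)" unfolding K3_def S_def \<beta>_def
      by (simp add: real_sqrt_divide)
    have sN: "sqrt (real N) * sqrt (real N) = real N" using Np by simp
    have sNp: "sqrt (real N) > 0" using Np by simp
    have sS: "sqrt S * sqrt S = S" using S0 by simp
    have e1: "K3 ^ 3 / sqrt (real N) = sqrt S ^ 3 / sqrt (real N) ^ 4"
      unfolding K3 by (simp add: power_divide power4_eq_xxxx power3_eq_cube)
    have e2: "sqrt (real N) ^ 4 = (real N)^2"
      using Np by (simp add: power4_eq_xxxx power2_eq_square sN mult.assoc[symmetric])
    have e3: "sqrt S ^ 3 = S * sqrt S" using sS by (simp add: power3_eq_cube)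
    have "L_H * K3 ^ 3 / (2 * sqrt (real N)) = L_H / 2 * (K3 ^ 3 / sqrt (real N))" by simp
    also have "\<dots> = L_H / (2 * (real N)^2) * (S * sqrt S)" unfolding e1 e2 e3 by simp
    finally have "L_H * K3 ^ 3 / (2 * sqrt (real N)) = L_H / (2 * (real N)^2) * (S * sqrt S)" .
    moreover have "L_H / (2 * (real N)^2) * (\<Sum>k<N. (norm (\<beta> k))^3) \<le> L_H / (2 * (real N)^2) * (S * sqrt S)"
      by (rule mult_left_mono[OF s3]) (use L0 in simp)
    ultimately show ?thesis by simp
  qed
  finally show ?thesis .
qed

end
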